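(* Let $A\in \mathbb{Z}^{m\times n}$, $b\in \mathbb{Z}^m$. If $Ax=b$ has a $p$-adic solution and a $q$-adic solution, for distinct primes $p$ and $q$, then $Ax=b$ has an integral solution.
   Context: For a prime $p$, a $p$-adic rational is a number $a/p^k$ with $a,k\in\mathbb{Z}$, $k\ge0$; a vector is $p$-adic if all entries are $p$-adic rationals. *)

theory Defs
  imports Complex_Main "HOL-Computational_Algebra.Primes"
begin

definition p_adic_rat :: "nat \<Rightarrow> rat \<Rightarrow> bool" where
  "p_adic_rat p x \<longleftrightarrow> (\<exists>(a::int) (k::nat). x = of_int a / of_nat p ^ k)"

definition solves :: "nat \<Rightarrow> nat \<Rightarrow> (nat \<Rightarrow> nat \<Rightarrow> int) \<Rightarrow> (nat \<Rightarrow> int) \<Rightarrow> (nat \<Rightarrow> rat) \<Rightarrow> bool" where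
  "solves m n A b x \<longleftrightarrow> (\<forall>i<m. (\<Sum>j<n. of_int (A i j) * x j) = of_int (b i))"

end

theory Submission
  imports Defs
begin

lemma clear_den:
  assumes p0: "p > 0" and s: "solves m n A b x" and h: "\<forall>j<n. p_adic_rat p (x j)"
  shows "\<exists>(X::nat \<Rightarrow> int) K. \<forall>i<m. (\<Sum>j<n. A i j * X j) = int p ^ K * b i"
proof -
  from h have "\<forall>j. \<exists>a k. j < n \<longrightarrow> x j = of_int a / of_nat p ^ k"
    unfolding p_adic_rat_def by blast
  then obtain a k where ak: "\<And>j. j < n \<Longrightarrow> x j = of_int (a j) / of_nat p ^ (k j)"
    by metis
  define K where "K = (\<Sum>j<n. k j)"
  define X where "X j = a j * int p ^ (K - k j)" for j
  have kle: "k j \<le> K" if "j < n" for j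
    unfolding K_def using that by (intro member_le_sum) auto
  have X: "of_int (X j) = x j * of_nat p ^ K" if "j < n" for j
  proof -
    have "(of_nat p :: rat) ^ K = of_nat p ^ k j * of_nat p ^ (K - k j)"
      using kle[OF that] by (simp add: power_add[symmetric])
    then show ?thesis using p0 ak[OF that] unfolding X_def by simp
  qed
  show ?thesis
  proof (intro exI allI impI)
    fix i assume i: "i < m"
    have "of_int (\<Sum>j<n. A i j * X j) = (\<Sum>j<n. of_int (A i j) * x j) * (of_nat p ^ K :: rat)"
      by (simp add: sum_distrib_right X mult.assoc)
    also have "\<dots> = of_int (int p ^ K * b i)"
      using s i unfolding solves_def by simp
    finally show "(\<Sum>j<n. A i j * X j) = int p ^ K * b i" by (simp only: of_int_eq_iff)
  qed
qed

theorem corollary2p5: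
  fixes m n :: nat and A :: "nat \<Rightarrow> nat \<Rightarrow> int" and b :: "nat \<Rightarrow> int" and p q :: nat
  assumes "prime p" and "prime q" and "p \<noteq> q"
    and "\<exists>x. solves m n A b x \<and> (\<forall>j<n. p_adic_rat p (x j))"
    and "\<exists>y. solves m n A b y \<and> (\<forall>j<n. p_adic_rat q (y j))"
  shows "\<exists>z::nat \<Rightarrow> int. solves m n A b (\<lambda>j. of_int (z j))"
proof -
  have p0: "p > 0" and q0: "q > 0" using assms(1,2) prime_gt_0_nat by auto
  obtain X K where X: "\<forall>i<m. (\<Sum>j<n. A i j * X j) = int p ^ K * b i"
    using clear_den[OF p0] assms(4) by blast
  obtain Y L where Y: "\<forall>i<m. (\<Sum>j<n. A i j * Y j) = int q ^ L * b i"
    using clear_den[OF q0] assms(5) by blast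
  have "coprime (int p) (int q)"
    using assms(1-3) by (simp add: primes_coprime)
  then have "coprime (int p ^ K) (int q ^ L)" by simp
  then obtain u v where uv: "u * int p ^ K + v * int q ^ L = 1"
    by (metis bezout_int coprime_iff_gcd_eq_1)
  define z where "z j = u * X j + v * Y j" for j
  have "(\<Sum>j<n. A i j * z j) = b i" if i: "i < m" for i
  proof -
    have "(\<Sum>j<n. A i j * z j) = u * (\<Sum>j<n. A i j * X j) + v * (\<Sum>j<n. A i j * Y j)"
      unfolding z_def by (simp add: sum_distrib_left sum.distrib algebra_simps)
    also have "\<dots> = (u * int p ^ K + v * int q ^ L) * b i" using X Y i by (simp add: algebra_simps)
    finally show ?thesis using uv by simp
  qed
  then have "solves m n A b (\<lambda>j. of_int (z j))"
    unfolding solves_def by (metis (no_types, lifting) of_int_eq_iff of_int_mult of_int_sum sum.cong)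
  then show ?thesis by blast
qed

end
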